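(* Let $a>b>0$, $c^2=a^2-b^2$, $\delta=\sqrt{a^4-a^2b^2+b^4}$, and let $E$ be the ellipse $\frac{x^2}{a^2}+\frac{y^2}{b^2}=1$. Let $C$ be the caustic of the 3-periodic billiard orbits of $E$, i.e. the ellipse $\frac{x^2}{a_c^2}+\frac{y^2}{b_c^2}=1$ with $a_c=\frac{a(\delta-b^2)}{c^2}$, $b_c=\frac{b(a^2-\delta)}{c^2}$. Let $A_b$ and $A_c$ be the areas enclosed by $E$ and $C$. Then for every 3-periodic billiard orbit in $E$, with inradius $r$ and circumradius $R$, \[ \frac{A_c}{A_b}=\frac{r}{2R}. \]
   Context: A 3-periodic billiard orbit in the ellipse $E$ is a nondegenerate triangle $P_1P_2P_3$ with all vertices on $E$ such that at each vertex $P_i$ the normal line to $E$ at $P_i$ bisects the interior angle of the triangle at $P_i$. All sides of all such orbits are tangent to the confocal ellipse $C$ described in the claim. *)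

theory Defs
  imports "HOL-Analysis.Analysis"
begin

definition ellipse :: "real \<Rightarrow> real \<Rightarrow> (real \<times> real) set" where
  "ellipse a b = {p. (fst p)\<^sup>2 / a\<^sup>2 + (snd p)\<^sup>2 / b\<^sup>2 = 1}"

definition ellipse_region :: "real \<Rightarrow> real \<Rightarrow> (real \<times> real) set" where
  "ellipse_region a b = {p. (fst p)\<^sup>2 / a\<^sup>2 + (snd p)\<^sup>2 / b\<^sup>2 \<le> 1}"

text \<open>Outward normal direction of the ellipse at p (gradient of the defining function, up to 2).\<close>
definition ellipse_normal :: "real \<Rightarrow> real \<Rightarrow> real \<times> real \<Rightarrow> real \<times> real" where
  "ellipse_normal a b p = (fst p / a\<^sup>2, snd p / b\<^sup>2)"

definition cross2 :: "real \<times> real \<Rightarrow> real \<times> real \<Rightarrow> real" where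
  "cross2 u v = fst u * snd v - snd u * fst v"

text \<open>The normal line at P bisects the interior angle of the triangle at P with other
  vertices Q, S: the interior bisector direction (sum of unit vectors towards Q and S)
  is parallel to the normal.\<close>
definition normal_bisects :: "real \<Rightarrow> real \<Rightarrow> real \<times> real \<Rightarrow> real \<times> real \<Rightarrow> real \<times> real \<Rightarrow> bool" where
  "normal_bisects a b P Q S \<longleftrightarrow>
     cross2 ((1 / norm (Q - P)) *\<^sub>R (Q - P) + (1 / norm (S - P)) *\<^sub>R (S - P))
            (ellipse_normal a b P) = 0"

definition billiard_3_orbit ::
  "real \<Rightarrow> real \<Rightarrow> real \<times> real \<Rightarrow> real \<times> real \<Rightarrow> real \<times> real \<Rightarrow> bool" where
  "billiard_3_orbit a b P1 P2 P3 \<longleftrightarrow>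
     \<not> collinear {P1, P2, P3} \<and>
     P1 \<in> ellipse a b \<and> P2 \<in> ellipse a b \<and> P3 \<in> ellipse a b \<and>
     normal_bisects a b P1 P2 P3 \<and> normal_bisects a b P2 P3 P1 \<and> normal_bisects a b P3 P1 P2"

definition circumradius :: "real \<times> real \<Rightarrow> real \<times> real \<Rightarrow> real \<times> real \<Rightarrow> real" where
  "circumradius P1 P2 P3 =
     (THE R. \<exists>Z. dist Z P1 = R \<and> dist Z P2 = R \<and> dist Z P3 = R)"

definition inradius :: "real \<times> real \<Rightarrow> real \<times> real \<Rightarrow> real \<times> real \<Rightarrow> real" where
  "inradius P1 P2 P3 =
     (THE r. \<exists>I \<in> interior (convex hull {P1, P2, P3}).
        infdist I (affine hull {P1, P2}) = r \<and>
        infdist I (affine hull {P2, P3}) = r \<and>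
        infdist I (affine hull {P3, P1}) = r)"

end

theory Submission
  imports Defs
begin

lemma ell_closed: "closed (ellipse_region p q)"
  unfolding ellipse_region_def divide_inverse by (intro closed_Collect_le continuous_intros)

lemma ell_meas_borel[measurable]: "ellipse_region p q \<in> sets borel"
  using ell_closed by (rule borel_closed)

lemma ell_scale: "p > 0 \<Longrightarrow> q > 0 \<Longrightarrow>
  indicator (ellipse_region p q) (x, y) = (indicator (ellipse_region 1 1) (x/p, y/q) :: ennreal)"
  by (simp add: ellipse_region_def indicator_def power_divide)

lemma ell_emeasure:
  assumes p: "p > 0" and q: "q > 0"
  shows "emeasure lborel (ellipse_region p q) = ennreal (p*q) * emeasure lborel (ellipse_region 1 1)"
proof -
  have gen: "emeasure lborel (ellipse_region p q) = (\<integral>\<^sup>+x. \<integral>\<^sup>+y. indicator (ellipse_region p q) (x,y) \<partial>lborel \<partial>lborel)" for p q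
  proof -
    have "emeasure lborel (ellipse_region p q) = (\<integral>\<^sup>+z. indicator (ellipse_region p q) z \<partial>(lborel \<Otimes>\<^sub>M lborel))"
      by (simp add: lborel_prod)
    also have "\<dots> = (\<integral>\<^sup>+x. \<integral>\<^sup>+y. indicator (ellipse_region p q) (x,y) \<partial>lborel \<partial>lborel)"
      by (rule lborel.nn_integral_fst[symmetric]) (simp only: lborel_prod, rule borel_measurable_indicator, simp)
    finally show ?thesis .
  qed
  have inner: "(\<integral>\<^sup>+y. indicator (ellipse_region 1 1) (x', y/q) \<partial>lborel) = ennreal q * (\<integral>\<^sup>+y. indicator (ellipse_region 1 1) (x', y) \<partial>lborel)" for x'
    using nn_integral_real_affine[where f="\<lambda>y. indicator (ellipse_region 1 1) (x', y/q)" and c=q and t=0] q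
    by simp
  have outer: "(\<integral>\<^sup>+x. F (x/p) \<partial>lborel) = ennreal p * (\<integral>\<^sup>+x. F x \<partial>lborel)" if [measurable]: "F \<in> borel_measurable borel" for F
    using nn_integral_real_affine[where f="\<lambda>x. F (x/p)" and c=p and t=0] p
    by simp
  have "emeasure lborel (ellipse_region p q) = (\<integral>\<^sup>+x. \<integral>\<^sup>+y. indicator (ellipse_region 1 1) (x/p,y/q) \<partial>lborel \<partial>lborel)"
    unfolding gen by (intro nn_integral_cong) (rule ell_scale[OF p q])
  also have "\<dots> = (\<integral>\<^sup>+x. ennreal q * (\<integral>\<^sup>+y. indicator (ellipse_region 1 1) (x/p,y) \<partial>lborel) \<partial>lborel)"
    by (simp add: inner)
  also have "\<dots> = ennreal p * (\<integral>\<^sup>+x. ennreal q * (\<integral>\<^sup>+y. indicator (ellipse_region 1 1) (x,y) \<partial>lborel) \<partial>lborel)"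
    by (rule outer) measurable
  also have "\<dots> = ennreal p * (ennreal q * (\<integral>\<^sup>+x. (\<integral>\<^sup>+y. indicator (ellipse_region 1 1) (x,y) \<partial>lborel) \<partial>lborel))"
  proof -
    have "(\<lambda>x. \<integral>\<^sup>+y. indicator (ellipse_region 1 1) (x,y) \<partial>lborel) \<in> borel_measurable lborel"
      by (rule lborel.borel_measurable_nn_integral_fst) (simp only: lborel_prod, rule borel_measurable_indicator, simp)
    then show ?thesis by (subst nn_integral_cmult) auto
  qed
  also have "\<dots> = ennreal (p*q) * emeasure lborel (ellipse_region 1 1)"
  proof -
    have "ennreal (p*q) = ennreal p * ennreal q" using p q by (simp add: ennreal_mult)
    then show ?thesis by (simp add: gen mult.assoc)
  qed
  finally show ?thesis .
qed

lemma ell_unit: "ellipse_region 1 1 = cball (0::real\<times>real) 1"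
  by (auto simp: ellipse_region_def cball_def dist_norm norm_Pair real_sqrt_le_1_iff)

lemma ell_measure:
  assumes p: "p > 0" and q: "q > 0"
  shows "measure lborel (ellipse_region p q) = p * q * measure lborel (ellipse_region 1 1)"
    and "measure lborel (ellipse_region 1 1) > 0"
proof -
  have fin: "emeasure lborel (ellipse_region 1 1) < \<infinity>"
    using emeasure_lborel_cball_finite[of "0::real\<times>real" 1] by (simp add: ell_unit)
  show "measure lborel (ellipse_region p q) = p * q * measure lborel (ellipse_region 1 1)"
    unfolding measure_def ell_emeasure[OF p q] using fin p q
    by (simp add: enn2real_mult)
  show "measure lborel (ellipse_region 1 1) > 0"
    unfolding ell_unit by simp
qed

lemma dist_pp: "dist (a::real, b::real) (c, d) = sqrt ((a - c)\<^sup>2 + (b - d)\<^sup>2)"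
  by (simp add: dist_Pair_Pair dist_real_def)

lemma cross_zero_iff:
  fixes X Y :: "real \<times> real"
  shows "cross2 X Y = 0 \<longleftrightarrow> X = 0 \<or> Y = 0 \<or> (\<exists>c. Y = c *\<^sub>R X)"
proof
  assume h: "cross2 X Y = 0"
  obtain x1 x2 where X: "X = (x1, x2)" by fastforce
  obtain y1 y2 where Y: "Y = (y1, y2)" by fastforce
  have h': "x1 * y2 - x2 * y1 = 0" using h by (simp add: cross2_def X Y)
  show "X = 0 \<or> Y = 0 \<or> (\<exists>c. Y = c *\<^sub>R X)"
  proof (cases "x1 = 0")
    case True
    show ?thesis
    proof (cases "x2 = 0")
      case True
      with \<open>x1 = 0\<close> show ?thesis by (simp add: X zero_prod_def)
    next
      case False
      have "y1 = 0" using h' True False by simp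
      then have "Y = (y2 / x2) *\<^sub>R X" using True False by (simp add: X Y)
      then show ?thesis by blast
    qed
  next
    case False
    have "y2 = x2 * y1 / x1" using h' False by (simp add: field_simps)
    then have "Y = (y1 / x1) *\<^sub>R X" using False by (simp add: X Y)
    then show ?thesis by blast
  qed
next
  assume "X = 0 \<or> Y = 0 \<or> (\<exists>c. Y = c *\<^sub>R X)"
  then show "cross2 X Y = 0" by (auto simp: cross2_def)
qed

lemma collinear_iff_cross:
  fixes P Q S :: "real \<times> real"
  shows "collinear {P, Q, S} \<longleftrightarrow> cross2 (Q - P) (S - P) = 0"
proof -
  have "collinear {P, Q, S} \<longleftrightarrow> collinear {Q, P, S}" by (simp add: insert_commute)
  also have "\<dots> \<longleftrightarrow> collinear {0, Q - P, S - P}"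
    by (rule collinear_3) simp
  also have "\<dots> \<longleftrightarrow> cross2 (Q - P) (S - P) = 0"
    by (simp add: collinear_lemma cross_zero_iff)
  finally show ?thesis .
qed

lemma affine_hull_2_param:
  fixes P Q :: "real \<times> real"
  shows "affine hull {P, Q} = (\<lambda>t. P + t *\<^sub>R (Q - P)) ` UNIV"
proof -
  have "affine hull {P, Q} = {u *\<^sub>R P + v *\<^sub>R Q |u v. u + v = 1}" by (rule affine_hull_2)
  also have "\<dots> = (\<lambda>t. P + t *\<^sub>R (Q - P)) ` UNIV"
  proof (intro set_eqI iffI)
    fix z assume "z \<in> {u *\<^sub>R P + v *\<^sub>R Q |u v. u + v = 1}"
    then obtain u v where "u + v = 1" "z = u *\<^sub>R P + v *\<^sub>R Q" by blast
    then have uv: "u + v = 1" and zz: "z = u *\<^sub>R P + v *\<^sub>R Q" by auto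
    have "z = (u + v) *\<^sub>R P + v *\<^sub>R (Q - P)" using zz by (simp add: algebra_simps)
    then have "z = P + v *\<^sub>R (Q - P)" using uv by simp
    then show "z \<in> (\<lambda>t. P + t *\<^sub>R (Q - P)) ` UNIV" by blast
  next
    fix z assume "z \<in> (\<lambda>t. P + t *\<^sub>R (Q - P)) ` UNIV"
    then obtain t where "z = P + t *\<^sub>R (Q - P)" by blast
    then have "z = (1 - t) *\<^sub>R P + t *\<^sub>R Q" by (simp add: algebra_simps)
    then show "z \<in> {u *\<^sub>R P + v *\<^sub>R Q |u v. u + v = 1}" by force
  qed
  finally show ?thesis .
qed

lemma infdist_line:
  fixes P Q X :: "real \<times> real"
  assumes "P \<noteq> Q"
  shows "infdist X (affine hull {P, Q}) = \<bar>cross2 (Q - P) (X - P)\<bar> / dist P Q"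
proof -
  obtain p1 p2 where P: "P = (p1, p2)" by fastforce
  obtain q1 q2 where Q: "Q = (q1, q2)" by fastforce
  obtain x1 x2 where X: "X = (x1, x2)" by fastforce
  define v1 where "v1 = q1 - p1"
  define v2 where "v2 = q2 - p2"
  define w1 where "w1 = x1 - p1"
  define w2 where "w2 = x2 - p2"
  define L where "L = v1\<^sup>2 + v2\<^sup>2"
  define cr where "cr = v1 * w2 - v2 * w1"
  define dt where "dt = v1 * w1 + v2 * w2"
  have "v1 \<noteq> 0 \<or> v2 \<noteq> 0" using assms by (auto simp: P Q v1_def v2_def)
  then have Lpos: "L > 0" unfolding L_def by (auto simp: sum_power2_gt_zero_iff)
  have cr: "cross2 (Q - P) (X - P) = cr"
    by (simp add: cross2_def P Q X cr_def v1_def v2_def w1_def w2_def)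
  have dPQ: "dist P Q = sqrt L"
    by (simp add: P Q dist_pp L_def v1_def v2_def power2_commute)
  have dG: "dist X (P + t *\<^sub>R (Q - P)) = sqrt ((w1 - t * v1)\<^sup>2 + (w2 - t * v2)\<^sup>2)" for t
    by (simp add: P Q X dist_pp v1_def v2_def w1_def w2_def algebra_simps)
  have key: "L * ((w1 - t * v1)\<^sup>2 + (w2 - t * v2)\<^sup>2) = cr\<^sup>2 + (t * L - dt)\<^sup>2" for t
    unfolding L_def cr_def dt_def by (simp add: power2_eq_square algebra_simps)
  define val where "val = \<bar>cr\<bar> / sqrt L"
  have val_sq: "val = sqrt (cr\<^sup>2 / L)" unfolding val_def using Lpos
    by (simp add: real_sqrt_divide)
  have lower: "val \<le> dist X (P + t *\<^sub>R (Q - P))" for t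
  proof -
    have "cr\<^sup>2 \<le> L * ((w1 - t * v1)\<^sup>2 + (w2 - t * v2)\<^sup>2)" using key[of t] by simp
    then have "cr\<^sup>2 / L \<le> (w1 - t * v1)\<^sup>2 + (w2 - t * v2)\<^sup>2" using Lpos
      by (simp add: divide_le_eq mult.commute)
    then show ?thesis unfolding val_sq dG by (rule real_sqrt_le_mono)
  qed
  have attained: "dist X (P + (dt / L) *\<^sub>R (Q - P)) = val"
  proof -
    have "L * ((w1 - (dt/L) * v1)\<^sup>2 + (w2 - (dt/L) * v2)\<^sup>2) = cr\<^sup>2" using key[of "dt/L"] Lpos by simp
    then have "(w1 - (dt/L) * v1)\<^sup>2 + (w2 - (dt/L) * v2)\<^sup>2 = cr\<^sup>2 / L" using Lpos
      by (simp add: eq_divide_eq mult.commute)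
    then show ?thesis unfolding val_sq dG by simp
  qed
  have "infdist X (affine hull {P, Q}) = Inf (dist X ` ((\<lambda>t. P + t *\<^sub>R (Q - P)) ` UNIV))"
    unfolding affine_hull_2_param by (simp add: infdist_notempty)
  also have "\<dots> = val"
  proof (rule cInf_eq_minimum)
    show "val \<in> dist X ` (\<lambda>t. P + t *\<^sub>R (Q - P)) ` UNIV"
      using attained by (metis rangeI image_eqI)
  next
    fix y assume "y \<in> dist X ` (\<lambda>t. P + t *\<^sub>R (Q - P)) ` UNIV"
    then show "val \<le> y" using lower by auto
  qed
  finally show ?thesis unfolding val_def cr dPQ .
qed

lemma cross_comb:
  fixes P1 P2 P3 :: "real \<times> real"
  assumes "l1 + l2 + l3 = 1"
  shows "cross2 (P2 - P1) (l1 *\<^sub>R P1 + l2 *\<^sub>R P2 + l3 *\<^sub>R P3 - P1) = l3 * cross2 (P2 - P1) (P3 - P1)"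
    and "cross2 (P3 - P2) (l1 *\<^sub>R P1 + l2 *\<^sub>R P2 + l3 *\<^sub>R P3 - P2) = l1 * cross2 (P2 - P1) (P3 - P1)"
    and "cross2 (P1 - P3) (l1 *\<^sub>R P1 + l2 *\<^sub>R P2 + l3 *\<^sub>R P3 - P3) = l2 * cross2 (P2 - P1) (P3 - P1)"
proof -
  have l1: "l1 = 1 - l2 - l3" using assms by simp
  obtain x1 y1 where P1: "P1 = (x1, y1)" by fastforce
  obtain x2 y2 where P2: "P2 = (x2, y2)" by fastforce
  obtain x3 y3 where P3: "P3 = (x3, y3)" by fastforce
  show "cross2 (P2 - P1) (l1 *\<^sub>R P1 + l2 *\<^sub>R P2 + l3 *\<^sub>R P3 - P1) = l3 * cross2 (P2 - P1) (P3 - P1)"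
    "cross2 (P3 - P2) (l1 *\<^sub>R P1 + l2 *\<^sub>R P2 + l3 *\<^sub>R P3 - P2) = l1 * cross2 (P2 - P1) (P3 - P1)"
    "cross2 (P1 - P3) (l1 *\<^sub>R P1 + l2 *\<^sub>R P2 + l3 *\<^sub>R P3 - P3) = l2 * cross2 (P2 - P1) (P3 - P1)"
    unfolding l1 P1 P2 P3 cross2_def by (simp_all add: algebra_simps)
qed

lemma noncoll_facts:
  fixes P1 P2 P3 :: "real \<times> real"
  assumes nc: "\<not> collinear {P1, P2, P3}"
  shows "cross2 (P2 - P1) (P3 - P1) \<noteq> 0" "P1 \<noteq> P2" "P2 \<noteq> P3" "P3 \<noteq> P1"
proof -
  show c: "cross2 (P2 - P1) (P3 - P1) \<noteq> 0" using nc collinear_iff_cross by blast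
  show "P1 \<noteq> P2" using c by (auto simp: cross2_def)
  show "P3 \<noteq> P1" using c by (auto simp: cross2_def)
  show "P2 \<noteq> P3" using c by (auto simp: cross2_def algebra_simps)
qed

lemma inradius_formula:
  fixes P1 P2 P3 :: "real \<times> real"
  assumes nc: "\<not> collinear {P1, P2, P3}"
  shows "inradius P1 P2 P3 = \<bar>cross2 (P2 - P1) (P3 - P1)\<bar> / (dist P1 P2 + dist P2 P3 + dist P3 P1)"
proof -
  note nf = noncoll_facts[OF nc]
  define C where "C = \<bar>cross2 (P2 - P1) (P3 - P1)\<bar>"
  define d12 where "d12 = dist P1 P2"
  define d23 where "d23 = dist P2 P3"
  define d31 where "d31 = dist P3 P1"
  define p where "p = d12 + d23 + d31"
  have Cpos: "C > 0" using nf(1) by (simp add: C_def)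
  have dpos: "d12 > 0" "d23 > 0" "d31 > 0" using nf by (auto simp: d12_def d23_def d31_def)
  have ppos: "p > 0" using dpos by (simp add: p_def)
  have dists: "infdist (l1 *\<^sub>R P1 + l2 *\<^sub>R P2 + l3 *\<^sub>R P3) (affine hull {P1, P2}) = \<bar>l3\<bar> * C / d12"
     "infdist (l1 *\<^sub>R P1 + l2 *\<^sub>R P2 + l3 *\<^sub>R P3) (affine hull {P2, P3}) = \<bar>l1\<bar> * C / d23"
     "infdist (l1 *\<^sub>R P1 + l2 *\<^sub>R P2 + l3 *\<^sub>R P3) (affine hull {P3, P1}) = \<bar>l2\<bar> * C / d31"
    if "l1 + l2 + l3 = 1" for l1 l2 l3
    using infdist_line[OF nf(2)] infdist_line[OF nf(3)] infdist_line[OF nf(4)] cross_comb[OF that]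
    by (simp_all add: C_def d12_def d23_def d31_def abs_mult)
  have nad: "\<not> affine_dependent {P1, P2, P3}"
    using nc collinear_3_eq_affine_dependent by blast
  have card3: "card {P1, P2, P3} = 3" using nf by auto
  have int_eq: "interior (convex hull {P1, P2, P3}) =
     {y. \<exists>u. (\<forall>x\<in>{P1, P2, P3}. 0 < u x) \<and> sum u {P1, P2, P3} = 1 \<and> (\<Sum>x\<in>{P1, P2, P3}. u x *\<^sub>R x) = y}"
    using interior_convex_hull_explicit_minimal[OF nad] card3 by simp
  show ?thesis
    unfolding inradius_def C_def[symmetric] d12_def[symmetric] d23_def[symmetric] d31_def[symmetric] p_def[symmetric]
  proof (rule the_equality)
    define I where "I = (d23/p) *\<^sub>R P1 + (d31/p) *\<^sub>R P2 + (d12/p) *\<^sub>R P3"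
    have "d23/p + d31/p + d12/p = (d12 + d23 + d31)/p" using ppos by (simp add: field_simps)
    then have sum1: "d23/p + d31/p + d12/p = 1" using ppos by (simp add: p_def)
    define u where "u = (\<lambda>x. if x = P1 then d23/p else if x = P2 then d31/p else d12/p)"
    have "I \<in> interior (convex hull {P1, P2, P3})"
      unfolding int_eq
    proof (intro CollectI exI conjI)
      show "\<forall>x\<in>{P1, P2, P3}. 0 < u x" using dpos ppos by (simp add: u_def)
      show "sum u {P1, P2, P3} = 1" using nf sum1 by (simp add: u_def)
      show "(\<Sum>x\<in>{P1, P2, P3}. u x *\<^sub>R x) = I" using nf by (simp add: u_def I_def)
    qed
    moreover have "infdist I (affine hull {P1, P2}) = C / p" "infdist I (affine hull {P2, P3}) = C / p"
        "infdist I (affine hull {P3, P1}) = C / p"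
      unfolding I_def dists[OF sum1] using dpos ppos by (simp_all add: field_simps)
    ultimately show "\<exists>I\<in>interior (convex hull {P1, P2, P3}).
        infdist I (affine hull {P1, P2}) = C / p \<and> infdist I (affine hull {P2, P3}) = C / p \<and>
        infdist I (affine hull {P3, P1}) = C / p" by blast
  next
    fix r assume "\<exists>I\<in>interior (convex hull {P1, P2, P3}).
        infdist I (affine hull {P1, P2}) = r \<and> infdist I (affine hull {P2, P3}) = r \<and>
        infdist I (affine hull {P3, P1}) = r"
    then obtain I where I: "I \<in> convex hull {P1, P2, P3}" "infdist I (affine hull {P1, P2}) = r"
      "infdist I (affine hull {P2, P3}) = r" "infdist I (affine hull {P3, P1}) = r"
      using interior_subset by blast
    then obtain l1 l2 l3 where l: "0 \<le> l1" "0 \<le> l2" "0 \<le> l3" "l1 + l2 + l3 = 1"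
      "I = l1 *\<^sub>R P1 + l2 *\<^sub>R P2 + l3 *\<^sub>R P3"
      unfolding convex_hull_3 by blast
    have r3: "r = l3 * C / d12" and r1: "r = l1 * C / d23" and r2: "r = l2 * C / d31"
      using I(2-4) dists[OF l(4)] l by (simp_all add: l(5))
    have "r * d12 = l3 * C" using r3 dpos(1) by simp
    moreover have "r * d23 = l1 * C" using r1 dpos(2) by simp
    moreover have "r * d31 = l2 * C" using r2 dpos(3) by simp
    ultimately
    have "r * p = (l1 + l2 + l3) * C" by (simp add: p_def algebra_simps)
    then have "r * p = C" using l(4) by simp
    then show "r = C / p" using ppos by (simp add: field_simps)
  qed
qed

lemma circumradius_formula:
  fixes P1 P2 P3 :: "real \<times> real"
  assumes nc: "\<not> collinear {P1, P2, P3}"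
  shows "circumradius P1 P2 P3 = dist P1 P2 * dist P2 P3 * dist P3 P1 / (2 * \<bar>cross2 (P2 - P1) (P3 - P1)\<bar>)"
proof -
  note nf = noncoll_facts[OF nc]
  obtain x1 y1 where P1: "P1 = (x1, y1)" by fastforce
  obtain x2 y2 where P2: "P2 = (x2, y2)" by fastforce
  obtain x3 y3 where P3: "P3 = (x3, y3)" by fastforce
  define X1 where "X1 = x2 - x1"
  define X2 where "X2 = y2 - y1"
  define Y1 where "Y1 = x3 - x1"
  define Y2 where "Y2 = y3 - y1"
  define c where "c = X1 * Y2 - X2 * Y1"
  define nX where "nX = X1\<^sup>2 + X2\<^sup>2"
  define nY where "nY = Y1\<^sup>2 + Y2\<^sup>2"
  define nXY where "nXY = (X1 - Y1)\<^sup>2 + (X2 - Y2)\<^sup>2"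
  have cr: "cross2 (P2 - P1) (P3 - P1) = c"
    by (simp add: cross2_def P1 P2 P3 c_def X1_def X2_def Y1_def Y2_def)
  have c0: "c \<noteq> 0" using nf(1) cr by simp
  have d12: "dist P1 P2 = sqrt nX" by (simp add: P1 P2 dist_pp nX_def X1_def X2_def power2_commute)
  have d23: "dist P2 P3 = sqrt nXY" by (simp add: P3 P2 dist_pp nXY_def X1_def X2_def Y1_def Y2_def)
  have d31: "dist P3 P1 = sqrt nY" by (simp add: P3 P1 dist_pp nY_def Y1_def Y2_def)
  define O1 where "O1 = (Y2 * nX - X2 * nY) / (2 * c)"
  define O2 where "O2 = (X1 * nY - Y1 * nX) / (2 * c)"
  have O1': "2 * c * O1 = Y2 * nX - X2 * nY" using c0 by (simp add: O1_def)
  have O2': "2 * c * O2 = X1 * nY - Y1 * nX" using c0 by (simp add: O2_def)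
  define R0 where "R0 = sqrt (nX * nY * nXY / (4 * c\<^sup>2))"
  have R0_eq: "R0 = sqrt nX * sqrt nXY * sqrt nY / (2 * \<bar>c\<bar>)"
  proof -
    have "sqrt (4 * c\<^sup>2) = 2 * \<bar>c\<bar>" by (simp add: real_sqrt_mult)
    then show ?thesis unfolding R0_def by (simp add: real_sqrt_divide real_sqrt_mult mult_ac)
  qed
  have idO: "(2 * c)\<^sup>2 * (O1\<^sup>2 + O2\<^sup>2) = nX * nY * nXY"
  proof -
    have "(2 * c)\<^sup>2 * (O1\<^sup>2 + O2\<^sup>2) = (2 * c * O1)\<^sup>2 + (2 * c * O2)\<^sup>2" by (simp add: power2_eq_square algebra_simps)
    also have "\<dots> = nX * nY * nXY" unfolding O1' O2' nX_def nY_def nXY_def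
      by (simp add: power2_eq_square algebra_simps)
    finally show ?thesis .
  qed
  have normO: "O1\<^sup>2 + O2\<^sup>2 = nX * nY * nXY / (4 * c\<^sup>2)"
    using idO c0 by (simp add: eq_divide_eq power_mult_distrib mult.commute)
  have dotX: "2 * (O1 * X1 + O2 * X2) = nX"
  proof -
    have "2 * c * (2 * (O1 * X1 + O2 * X2)) = 2 * X1 * (2 * c * O1) + 2 * X2 * (2 * c * O2)" by (simp add: algebra_simps)
    also have "\<dots> = 2 * X1 * (Y2 * nX - X2 * nY) + 2 * X2 * (X1 * nY - Y1 * nX)" by (simp only: O1' O2')
    also have "\<dots> = 2 * c * nX" by (simp add: c_def nX_def nY_def algebra_simps)
    finally have "2 * c * (2 * (O1 * X1 + O2 * X2)) = 2 * c * nX" .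
    then show ?thesis using c0 by simp
  qed
  have dotY: "2 * (O1 * Y1 + O2 * Y2) = nY"
  proof -
    have "2 * c * (2 * (O1 * Y1 + O2 * Y2)) = 2 * Y1 * (2 * c * O1) + 2 * Y2 * (2 * c * O2)" by (simp add: algebra_simps)
    also have "\<dots> = 2 * Y1 * (Y2 * nX - X2 * nY) + 2 * Y2 * (X1 * nY - Y1 * nX)" by (simp only: O1' O2')
    also have "\<dots> = 2 * c * nY" by (simp add: c_def nX_def nY_def algebra_simps)
    finally have "2 * c * (2 * (O1 * Y1 + O2 * Y2)) = 2 * c * nY" .
    then show ?thesis using c0 by simp
  qed
  show ?thesis
    unfolding circumradius_def d12 d23 d31 cr R0_eq[symmetric]
  proof (rule the_equality)
    define Z where "Z = (x1 + O1, y1 + O2)"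
    have "dist Z P1 = sqrt (O1\<^sup>2 + O2\<^sup>2)" by (simp add: Z_def P1 dist_pp)
    moreover have "dist Z P2 = sqrt (O1\<^sup>2 + O2\<^sup>2)"
    proof -
      have "dist Z P2 = sqrt ((O1 - X1)\<^sup>2 + (O2 - X2)\<^sup>2)" by (simp add: Z_def P2 dist_pp X1_def X2_def algebra_simps)
      also have "(O1 - X1)\<^sup>2 + (O2 - X2)\<^sup>2 = O1\<^sup>2 + O2\<^sup>2"
        using dotX by (simp add: power2_eq_square algebra_simps nX_def)
      finally show ?thesis .
    qed
    moreover have "dist Z P3 = sqrt (O1\<^sup>2 + O2\<^sup>2)"
    proof -
      have "dist Z P3 = sqrt ((O1 - Y1)\<^sup>2 + (O2 - Y2)\<^sup>2)" by (simp add: Z_def P3 dist_pp Y1_def Y2_def algebra_simps)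
      also have "(O1 - Y1)\<^sup>2 + (O2 - Y2)\<^sup>2 = O1\<^sup>2 + O2\<^sup>2"
        using dotY by (simp add: power2_eq_square algebra_simps nY_def)
      finally show ?thesis .
    qed
    ultimately show "\<exists>Z. dist Z P1 = R0 \<and> dist Z P2 = R0 \<and> dist Z P3 = R0"
      unfolding R0_def normO by blast
  next
    fix R assume "\<exists>Z. dist Z P1 = R \<and> dist Z P2 = R \<and> dist Z P3 = R"
    then obtain z1 z2 where Z: "dist (z1, z2) P1 = R" "dist (z1, z2) P2 = R" "dist (z1, z2) P3 = R"
      by (metis surj_pair)
    define W1 where "W1 = z1 - x1"
    define W2 where "W2 = z2 - y1"
    have e1: "R = sqrt (W1\<^sup>2 + W2\<^sup>2)" using Z(1) by (simp add: P1 dist_pp W1_def W2_def)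
    have e2: "R = sqrt ((W1 - X1)\<^sup>2 + (W2 - X2)\<^sup>2)" using Z(2)
      by (simp add: P2 dist_pp W1_def W2_def X1_def X2_def algebra_simps)
    have e3: "R = sqrt ((W1 - Y1)\<^sup>2 + (W2 - Y2)\<^sup>2)" using Z(3)
      by (simp add: P3 dist_pp W1_def W2_def Y1_def Y2_def algebra_simps)
    have "W1\<^sup>2 + W2\<^sup>2 = (W1 - X1)\<^sup>2 + (W2 - X2)\<^sup>2" using e1 e2 by simp
    then have wX: "2 * (W1 * X1 + W2 * X2) = nX" by (simp add: power2_eq_square algebra_simps nX_def)
    have "W1\<^sup>2 + W2\<^sup>2 = (W1 - Y1)\<^sup>2 + (W2 - Y2)\<^sup>2" using e1 e3 by simp
    then have wY: "2 * (W1 * Y1 + W2 * Y2) = nY" by (simp add: power2_eq_square algebra_simps nY_def)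
    have "2 * c * W1 = Y2 * (2 * (W1 * X1 + W2 * X2)) - X2 * (2 * (W1 * Y1 + W2 * Y2))"
      by (simp add: c_def algebra_simps)
    then have "2 * c * W1 = 2 * c * O1" unfolding wX wY O1' .
    then have w1: "W1 = O1" using c0 by simp
    have "2 * c * W2 = X1 * (2 * (W1 * Y1 + W2 * Y2)) - Y1 * (2 * (W1 * X1 + W2 * X2))"
      by (simp add: c_def algebra_simps)
    then have "2 * c * W2 = 2 * c * O2" unfolding wX wY O2' .
    then have w2: "W2 = O2" using c0 by simp
    show "R = R0" unfolding e1 w1 w2 R0_def normO ..
  qed
qed

lemma bis_alg:
  fixes u1 u2 v1 v2 n1 n2 :: real
  assumes "u1\<^sup>2 + u2\<^sup>2 = 1" "v1\<^sup>2 + v2\<^sup>2 = 1" "(u1 + v1) * n2 - (u2 + v2) * n1 = 0"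
    and "u1 + v1 \<noteq> 0 \<or> u2 + v2 \<noteq> 0"
  shows "(u1 - v1) * n1 + (u2 - v2) * n2 = 0"
proof -
  define T where "T = (u1 - v1) * n1 + (u2 - v2) * n2"
  have h: "(u1 + v1) * n2 = (u2 + v2) * n1" using assms(3) by simp
  have "(u1 + v1) * T = n1 * ((u1\<^sup>2 + u2\<^sup>2) - (v1\<^sup>2 + v2\<^sup>2))"
  proof -
    have "(u1 + v1) * T = (u1 - v1) * (u1 + v1) * n1 + (u2 - v2) * ((u1 + v1) * n2)"
      by (simp add: T_def algebra_simps)
    also have "\<dots> = n1 * ((u1\<^sup>2 + u2\<^sup>2) - (v1\<^sup>2 + v2\<^sup>2))" unfolding h
      by (simp add: power2_eq_square algebra_simps)
    finally show ?thesis .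
  qed
  then have t1: "(u1 + v1) * T = 0" using assms(1,2) by simp
  have "(u2 + v2) * T = n2 * ((u1\<^sup>2 + u2\<^sup>2) - (v1\<^sup>2 + v2\<^sup>2))"
  proof -
    have "(u2 + v2) * T = (u1 - v1) * ((u2 + v2) * n1) + (u2 - v2) * (u2 + v2) * n2"
      by (simp add: T_def algebra_simps)
    also have "\<dots> = n2 * ((u1\<^sup>2 + u2\<^sup>2) - (v1\<^sup>2 + v2\<^sup>2))" unfolding h[symmetric]
      by (simp add: power2_eq_square algebra_simps)
    finally show ?thesis .
  qed
  then have t2: "(u2 + v2) * T = 0" using assms(1,2) by simp
  show ?thesis using t1 t2 assms(4) by (auto simp: T_def)
qed

lemma pair_rel:
  fixes a b ui vi uj vj k :: real
  assumes ci: "ui\<^sup>2 + vi\<^sup>2 = 1" and cj: "uj\<^sup>2 + vj\<^sup>2 = 1"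
    and ek: "(ui - uj)\<^sup>2 + (vi - vj)\<^sup>2 = k * sqrt (a\<^sup>2 * (ui - uj)\<^sup>2 + b\<^sup>2 * (vi - vj)\<^sup>2)"
    and epos: "(ui - uj)\<^sup>2 + (vi - vj)\<^sup>2 > 0"
  shows "2 * (ui * uj + vi * vj) - k\<^sup>2 * ((a\<^sup>2 - b\<^sup>2) / 2) * (ui * uj - vi * vj) = 2 - k\<^sup>2 * ((a\<^sup>2 + b\<^sup>2) / 2)"
proof -
  define e where "e = (ui - uj)\<^sup>2 + (vi - vj)\<^sup>2"
  define y where "y = ui * uj - vi * vj"
  have e2: "e = 2 - 2 * (ui * uj + vi * vj)"
    unfolding e_def using ci cj by (simp add: power2_eq_square algebra_simps)
  have dd: "a\<^sup>2 * (ui - uj)\<^sup>2 + b\<^sup>2 * (vi - vj)\<^sup>2 = e * ((a\<^sup>2 + b\<^sup>2) / 2 - ((a\<^sup>2 - b\<^sup>2) / 2) * y)"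
    unfolding e_def y_def using ci cj by algebra
  have "e\<^sup>2 = k\<^sup>2 * (a\<^sup>2 * (ui - uj)\<^sup>2 + b\<^sup>2 * (vi - vj)\<^sup>2)"
    using ek unfolding e_def by (simp add: power_mult_distrib)
  also have "\<dots> = k\<^sup>2 * (e * ((a\<^sup>2 + b\<^sup>2) / 2 - ((a\<^sup>2 - b\<^sup>2) / 2) * y))" by (simp only: dd)
  finally have "e * e = e * (k\<^sup>2 * ((a\<^sup>2 + b\<^sup>2) / 2 - ((a\<^sup>2 - b\<^sup>2) / 2) * y))"
    by (simp add: power2_eq_square algebra_simps)
  moreover have "e \<noteq> 0" using epos unfolding e_def by linarith
  ultimately have "e = k\<^sup>2 * ((a\<^sup>2 + b\<^sup>2) / 2 - ((a\<^sup>2 - b\<^sup>2) / 2) * y)" by simp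
  then show ?thesis unfolding e2 y_def by (simp add: field_simps)
qed

lemma cplx_rel:
  fixes ui vi uj vj mu al :: real
  assumes ci: "ui\<^sup>2 + vi\<^sup>2 = 1" and cj: "uj\<^sup>2 + vj\<^sup>2 = 1"
    and r: "2 * (ui * uj + vi * vj) - mu * (ui * uj - vi * vj) = al"
  shows "2 * ((Complex ui vi)\<^sup>2 + (Complex uj vj)\<^sup>2) - of_real mu * ((Complex ui vi)\<^sup>2 * (Complex uj vj)\<^sup>2 + 1)
           - 2 * of_real al * Complex ui vi * Complex uj vj = 0"
proof -
  define zi where "zi = Complex ui vi"
  define zj where "zj = Complex uj vj"
  have ni: "zi * cnj zi = 1" using ci by (simp add: zi_def complex_eq_iff power2_eq_square)
  have nj: "zj * cnj zj = 1" using cj by (simp add: zj_def complex_eq_iff power2_eq_square)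
  have s1: "zi * cnj zj + cnj zi * zj = of_real (2 * (ui * uj + vi * vj))"
    by (simp add: zi_def zj_def complex_eq_iff)
  have s2: "zi * zj + cnj zi * cnj zj = of_real (2 * (ui * uj - vi * vj))"
    by (simp add: zi_def zj_def complex_eq_iff)
  have fac: "2 * (zi\<^sup>2 + zj\<^sup>2) - of_real mu * (zi\<^sup>2 * zj\<^sup>2 + 1) - 2 * of_real al * zi * zj
     = zi * zj * (2 * (zi * cnj zj + cnj zi * zj) - of_real mu * (zi * zj + cnj zi * cnj zj) - 2 * of_real al)"
    using ni nj by algebra
  have rr: "2 * (2 * (ui * uj + vi * vj)) - mu * (2 * (ui * uj - vi * vj)) - 2 * al = 0"
    by (simp add: r[symmetric] algebra_simps)
  have "2 * (zi * cnj zj + cnj zi * zj) - of_real mu * (zi * zj + cnj zi * cnj zj) - 2 * of_real al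
     = of_real (2 * (2 * (ui * uj + vi * vj)) - mu * (2 * (ui * uj - vi * vj)) - 2 * al)"
    unfolding s1 s2 by simp
  also have "\<dots> = 0" unfolding rr by simp
  finally have "2 * (zi * cnj zj + cnj zi * zj) - of_real mu * (zi * zj + cnj zi * cnj zj) - 2 * of_real al = 0" .
  then show ?thesis using fac by (simp add: zi_def zj_def)
qed

lemma cancel_fac: "(a - b) * X = 0 \<Longrightarrow> a \<noteq> b \<Longrightarrow> X = (0::complex)"
  by simp

lemma cplx_core:
  fixes z1 z2 z3 m al :: complex
  assumes d12: "z1 \<noteq> z2" and d13: "z1 \<noteq> z3" and d23: "z2 \<noteq> z3" and nz: "z1 \<noteq> 0"
    and F12: "2 * (z1\<^sup>2 + z2\<^sup>2) - m * (z1\<^sup>2 * z2\<^sup>2 + 1) - 2 * al * z1 * z2 = 0"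
    and F13: "2 * (z1\<^sup>2 + z3\<^sup>2) - m * (z1\<^sup>2 * z3\<^sup>2 + 1) - 2 * al * z1 * z3 = 0"
    and F23: "2 * (z2\<^sup>2 + z3\<^sup>2) - m * (z2\<^sup>2 * z3\<^sup>2 + 1) - 2 * al * z2 * z3 = 0"
  shows "m\<^sup>2 = 4 + 4 * al" and "2 * (z1 + z2 + z3) = - m * (z1 * z2 * z3)"
proof -
  have "(z2 - z3) * ((2 - m * z1\<^sup>2) * (z2 + z3) - 2 * al * z1) = 0" using F12 F13 by algebra
  then have E1: "(2 - m * z1\<^sup>2) * (z2 + z3) - 2 * al * z1 = 0" using d23 by simp
  have "(z1 - z3) * ((2 - m * z2\<^sup>2) * (z1 + z3) - 2 * al * z2) = 0" using F12 F23 by algebra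
  then have E2: "(2 - m * z2\<^sup>2) * (z1 + z3) - 2 * al * z2 = 0" using d13 by simp
  have "(z1 - z2) * (-2 - m * (z1 * z2 + z1 * z3 + z2 * z3) - 2 * al) = 0" using E1 E2 by algebra
  then have "-2 - m * (z1 * z2 + z1 * z3 + z2 * z3) - 2 * al = 0" using d12
    by (rule cancel_fac)
  then have G1: "m * (z1 * z2 + z1 * z3 + z2 * z3) = -2 - 2 * al" by algebra
  have H1: "(2 - m * z1\<^sup>2) * z2 * z3 - (2 * z1\<^sup>2 - m) = 0" using F12 E1 by algebra
  have H2: "(2 - m * z2\<^sup>2) * z1 * z3 - (2 * z2\<^sup>2 - m) = 0" using F12 E2 by algebra
  have "(z1 - z2) * (-2 * z3 - m * (z1 * z2 * z3) - 2 * (z1 + z2)) = 0" using H1 H2 by algebra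
  then have "-2 * z3 - m * (z1 * z2 * z3) - 2 * (z1 + z2) = 0" using d12
    by (rule cancel_fac)
  then have G2: "2 * (z1 + z2 + z3) = - m * (z1 * z2 * z3)" by algebra
  then show "2 * (z1 + z2 + z3) = - m * (z1 * z2 * z3)" .
  have "z1 * (m + 2 * (z1 * z2 + z1 * z3 + z2 * z3)) = 0" using H1 G2 by algebra
  then have S2: "m + 2 * (z1 * z2 + z1 * z3 + z2 * z3) = 0" using nz by simp
  show "m\<^sup>2 = 4 + 4 * al" using G1 S2 by algebra
qed

lemma circ_dot:
  fixes p1 q1 p2 q2 :: real
  assumes "p1\<^sup>2 + q1\<^sup>2 = 1" "p2\<^sup>2 + q2\<^sup>2 = 1"
  shows "(p2 - p1) * p1 + (q2 - q1) * q1 = - ((p2 - p1)\<^sup>2 + (q2 - q1)\<^sup>2) / 2"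
proof -
  have "2 * ((p2 - p1) * p1 + (q2 - q1) * q1) = - ((p2 - p1)\<^sup>2 + (q2 - q1)\<^sup>2)" using assms by algebra
  then show ?thesis by simp
qed

lemma bisect_e:
  fixes a b :: real and P Q S :: "real \<times> real"
  assumes ab: "a > 0" "b > 0" and onE: "P \<in> ellipse a b" "Q \<in> ellipse a b" "S \<in> ellipse a b"
    and nc: "\<not> collinear {P, Q, S}" and nb: "normal_bisects a b P Q S"
  shows "((fst Q / a - fst P / a)\<^sup>2 + (snd Q / b - snd P / b)\<^sup>2) * dist P S
       = ((fst S / a - fst P / a)\<^sup>2 + (snd S / b - snd P / b)\<^sup>2) * dist P Q"
proof -
  note nf = noncoll_facts[OF nc]
  obtain x1 y1 where P: "P = (x1, y1)" by fastforce
  obtain x2 y2 where Q: "Q = (x2, y2)" by fastforce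
  obtain x3 y3 where S: "S = (x3, y3)" by fastforce
  have e1: "x1\<^sup>2 / a\<^sup>2 + y1\<^sup>2 / b\<^sup>2 = 1" using onE(1) by (simp add: ellipse_def P)
  have e2: "x2\<^sup>2 / a\<^sup>2 + y2\<^sup>2 / b\<^sup>2 = 1" using onE(2) by (simp add: ellipse_def Q)
  have e3: "x3\<^sup>2 / a\<^sup>2 + y3\<^sup>2 / b\<^sup>2 = 1" using onE(3) by (simp add: ellipse_def S)
  define dq where "dq = dist P Q"
  define ds where "ds = dist P S"
  have dqpos: "dq > 0" using nf by (simp add: dq_def)
  have dspos: "ds > 0" using nf by (simp add: ds_def dist_commute)
  have dq2: "dq\<^sup>2 = (x2 - x1)\<^sup>2 + (y2 - y1)\<^sup>2"
    by (simp add: dq_def P Q dist_pp power2_commute)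
  have ds2: "ds\<^sup>2 = (x3 - x1)\<^sup>2 + (y3 - y1)\<^sup>2"
    by (simp add: ds_def P S dist_pp power2_commute)
  have nq: "norm (Q - P) = dq" by (simp add: dq_def dist_norm norm_minus_commute)
  have ns: "norm (S - P) = ds" by (simp add: ds_def dist_norm norm_minus_commute)
  define u1 where "u1 = (x2 - x1) / dq"
  define u2 where "u2 = (y2 - y1) / dq"
  define v1 where "v1 = (x3 - x1) / ds"
  define v2 where "v2 = (y3 - y1) / ds"
  define n1 where "n1 = x1 / a\<^sup>2"
  define n2 where "n2 = y1 / b\<^sup>2"
  have "u1\<^sup>2 + u2\<^sup>2 = ((x2 - x1)\<^sup>2 + (y2 - y1)\<^sup>2) / dq\<^sup>2"
    by (simp add: u1_def u2_def power_divide add_divide_distrib)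
  then have hu: "u1\<^sup>2 + u2\<^sup>2 = 1" using dqpos by (simp add: dq2[symmetric])
  have "v1\<^sup>2 + v2\<^sup>2 = ((x3 - x1)\<^sup>2 + (y3 - y1)\<^sup>2) / ds\<^sup>2"
    by (simp add: v1_def v2_def power_divide add_divide_distrib)
  then have hv: "v1\<^sup>2 + v2\<^sup>2 = 1" using dspos by (simp add: ds2[symmetric])
  have hc: "(u1 + v1) * n2 - (u2 + v2) * n1 = 0"
    using nb unfolding normal_bisects_def nq ns
    by (simp add: cross2_def ellipse_normal_def P Q S u1_def u2_def v1_def v2_def n1_def n2_def)
  have hw: "u1 + v1 \<noteq> 0 \<or> u2 + v2 \<noteq> 0"
  proof (rule ccontr)
    assume "\<not> (u1 + v1 \<noteq> 0 \<or> u2 + v2 \<noteq> 0)"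
    then have "x3 - x1 = - (ds / dq) * (x2 - x1)" "y3 - y1 = - (ds / dq) * (y2 - y1)"
      using dqpos dspos by (auto simp: u1_def u2_def v1_def v2_def field_simps)
    then have "cross2 (Q - P) (S - P) = 0" by (simp add: cross2_def P Q S)
    then show False using nf(1) by simp
  qed
  have "(u1 - v1) * n1 + (u2 - v2) * n2 = 0" by (rule bis_alg[OF hu hv hc hw])
  then have E: "((x2 - x1) * n1 + (y2 - y1) * n2) / dq = ((x3 - x1) * n1 + (y3 - y1) * n2) / ds"
    by (simp add: u1_def u2_def v1_def v2_def algebra_simps add_divide_distrib diff_divide_distrib)
  have c1: "(x1/a)\<^sup>2 + (y1/b)\<^sup>2 = 1" using e1 by (simp add: power_divide)
  have c2: "(x2/a)\<^sup>2 + (y2/b)\<^sup>2 = 1" using e2 by (simp add: power_divide)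
  have c3: "(x3/a)\<^sup>2 + (y3/b)\<^sup>2 = 1" using e3 by (simp add: power_divide)
  have r2: "(x2 - x1) * n1 + (y2 - y1) * n2 = (x2/a - x1/a) * (x1/a) + (y2/b - y1/b) * (y1/b)"
    using ab by (simp add: n1_def n2_def power2_eq_square field_simps)
  have r3: "(x3 - x1) * n1 + (y3 - y1) * n2 = (x3/a - x1/a) * (x1/a) + (y3/b - y1/b) * (y1/b)"
    using ab by (simp add: n1_def n2_def power2_eq_square field_simps)
  define eq where "eq = (x2/a - x1/a)\<^sup>2 + (y2/b - y1/b)\<^sup>2"
  define es where "es = (x3/a - x1/a)\<^sup>2 + (y3/b - y1/b)\<^sup>2"
  have "(- eq / 2) / dq = (- es / 2) / ds"
    using E unfolding r2 r3 circ_dot[OF c1 c2] circ_dot[OF c1 c3] eq_def es_def .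
  then have "eq * ds = es * dq" using dqpos dspos by (simp add: field_simps)
  then show ?thesis by (simp add: P Q S dq_def ds_def eq_def es_def)
qed

lemma kappa_final:
  fixes a b \<delta> \<kappa> :: real
  assumes ab: "a > b" "b > 0" and hd: "\<delta> = sqrt (a ^ 4 - a\<^sup>2 * b\<^sup>2 + b ^ 4)"
    and kpos: "\<kappa> > 0"
    and q: "\<kappa>\<^sup>2 * ((a\<^sup>2 - b\<^sup>2) / 2)\<^sup>2 + 4 * ((a\<^sup>2 + b\<^sup>2) / 2) * \<kappa> - 12 = 0"
  shows "a\<^sup>2 * b\<^sup>2 * \<kappa>\<^sup>2 / (24 + 4 * \<kappa> * ((a\<^sup>2 + b\<^sup>2) / 2)) = (\<delta> - b\<^sup>2) * (a\<^sup>2 - \<delta>) / (a\<^sup>2 - b\<^sup>2)\<^sup>2"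
proof -
  define A where "A = (a\<^sup>2 + b\<^sup>2) / 2"
  define B where "B = (a\<^sup>2 - b\<^sup>2) / 2"
  have a2b2: "a\<^sup>2 > b\<^sup>2" using ab by (simp add: power_strict_mono)
  have Bpos: "B > 0" using a2b2 by (simp add: B_def)
  have Apos: "A > 0" using ab by (simp add: A_def sum_power2_gt_zero_iff)
  have rad: "a ^ 4 - a\<^sup>2 * b\<^sup>2 + b ^ 4 \<ge> 0"
  proof -
    have eq: "a ^ 4 - a\<^sup>2 * b\<^sup>2 + b ^ 4 = (a\<^sup>2 - b\<^sup>2)\<^sup>2 + a\<^sup>2 * b\<^sup>2" by (simp add: power2_eq_square power4_eq_xxxx algebra_simps)
    show ?thesis unfolding eq by (intro add_nonneg_nonneg zero_le_power2 mult_nonneg_nonneg)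
  qed
  have d2: "\<delta>\<^sup>2 = a ^ 4 - a\<^sup>2 * b\<^sup>2 + b ^ 4" using rad hd by simp
  have dpos: "\<delta> \<ge> 0" using hd rad by simp
  have dA: "\<delta>\<^sup>2 = A\<^sup>2 + 3 * B\<^sup>2" unfolding d2 A_def B_def by (simp add: power2_eq_square power4_eq_xxxx field_simps)
  have dgtA: "\<delta> > A"
  proof -
    have "A\<^sup>2 < \<delta>\<^sup>2" using dA Bpos by simp
    then show ?thesis using dpos Apos by (meson abs_le_square_iff abs_of_nonneg less_le_not_le not_le_imp_less power2_less_imp_less)
  qed
  have qq: "(B\<^sup>2 * \<kappa> - 2 * (\<delta> - A)) * (B\<^sup>2 * \<kappa> + 2 * (\<delta> + A)) = 0"
  proof -
    have "(B\<^sup>2 * \<kappa> - 2 * (\<delta> - A)) * (B\<^sup>2 * \<kappa> + 2 * (\<delta> + A)) = B\<^sup>2 * (\<kappa>\<^sup>2 * B\<^sup>2 + 4 * A * \<kappa> - 12) + 4 * (3 * B\<^sup>2 + A\<^sup>2 - \<delta>\<^sup>2)"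
      by (simp add: power2_eq_square algebra_simps)
    also have "\<dots> = 0" using q dA unfolding A_def B_def by (simp add: power_divide)
    finally show ?thesis .
  qed
  have "B\<^sup>2 * \<kappa> + 2 * (\<delta> + A) > 0" using Bpos kpos dpos Apos by (simp add: add_pos_nonneg)
  then have kap: "B\<^sup>2 * \<kappa> = 2 * (\<delta> - A)" using qq by simp
  define K where "K = \<delta> - A"
  have hK: "2 * K = 2 * \<delta> - (a\<^sup>2 + b\<^sup>2)" by (simp add: K_def A_def field_simps)
  have hA: "2 * A = a\<^sup>2 + b\<^sup>2" by (simp add: A_def)
  have hB: "2 * B = a\<^sup>2 - b\<^sup>2" by (simp add: B_def)
  have poly: "2 * a\<^sup>2 * b\<^sup>2 * K\<^sup>2 = (\<delta> - b\<^sup>2) * (a\<^sup>2 - \<delta>) * (3 * B\<^sup>2 + K * A)"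
    using d2 hK hA hB by algebra
  have kv: "\<kappa> = 2 * K / B\<^sup>2" using kap Bpos by (simp add: K_def field_simps)
  have c2: "a\<^sup>2 - b\<^sup>2 = 2 * B" by (simp add: B_def)
  have den: "24 + 4 * \<kappa> * A > 0" using mult_pos_pos[OF kpos Apos] by linarith
  have Kpos: "K > 0" using dgtA by (simp add: K_def)
  have den2: "3 * B\<^sup>2 + K * A > 0" using Bpos Kpos Apos by (simp add: add_pos_pos)
  have L: "a\<^sup>2 * b\<^sup>2 * \<kappa>\<^sup>2 / (24 + 4 * \<kappa> * A) = a\<^sup>2 * b\<^sup>2 * K\<^sup>2 / (2 * B\<^sup>2 * (3 * B\<^sup>2 + K * A))"
  proof (rule iffD2[OF frac_eq_eq])
    show "24 + 4 * \<kappa> * A \<noteq> 0" using den by simp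
    show "2 * B\<^sup>2 * (3 * B\<^sup>2 + K * A) \<noteq> 0" using Bpos den2 by simp
    show "a\<^sup>2 * b\<^sup>2 * \<kappa>\<^sup>2 * (2 * B\<^sup>2 * (3 * B\<^sup>2 + K * A)) = a\<^sup>2 * b\<^sup>2 * K\<^sup>2 * (24 + 4 * \<kappa> * A)"
      using kap unfolding K_def by algebra
  qed
  have pp: "(\<delta> - b\<^sup>2) * (a\<^sup>2 - \<delta>) = 2 * a\<^sup>2 * b\<^sup>2 * K\<^sup>2 / (3 * B\<^sup>2 + K * A)"
    using poly den2 by (simp add: eq_divide_eq)
  have R: "(\<delta> - b\<^sup>2) * (a\<^sup>2 - \<delta>) / (2 * B)\<^sup>2 = a\<^sup>2 * b\<^sup>2 * K\<^sup>2 / (2 * B\<^sup>2 * (3 * B\<^sup>2 + K * A))"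
  proof (rule iffD2[OF frac_eq_eq])
    show "(2 * B)\<^sup>2 \<noteq> 0" using Bpos by simp
    show "2 * B\<^sup>2 * (3 * B\<^sup>2 + K * A) \<noteq> 0" using Bpos den2 by simp
    show "(\<delta> - b\<^sup>2) * (a\<^sup>2 - \<delta>) * (2 * B\<^sup>2 * (3 * B\<^sup>2 + K * A)) = a\<^sup>2 * b\<^sup>2 * K\<^sup>2 * (2 * B)\<^sup>2"
      using poly by algebra
  qed
  show ?thesis unfolding A_def[symmetric] c2 L R ..
qed

lemma Dsq:
  fixes u1 v1 u2 v2 u3 v3 :: real
  assumes "u1\<^sup>2 + v1\<^sup>2 = 1" "u2\<^sup>2 + v2\<^sup>2 = 1" "u3\<^sup>2 + v3\<^sup>2 = 1"
  shows "4 * ((u2 - u1) * (v3 - v1) - (v2 - v1) * (u3 - u1))\<^sup>2 =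
    ((u1 - u2)\<^sup>2 + (v1 - v2)\<^sup>2) * ((u1 - u3)\<^sup>2 + (v1 - v3)\<^sup>2) * ((u2 - u3)\<^sup>2 + (v2 - v3)\<^sup>2)"
  using assms by algebra

lemma core:
  fixes a b \<delta> :: real and P1 P2 P3 :: "real \<times> real"
  assumes ab: "a > b" "b > 0" and hd: "\<delta> = sqrt (a ^ 4 - a\<^sup>2 * b\<^sup>2 + b ^ 4)"
    and orb: "billiard_3_orbit a b P1 P2 P3"
  shows "inradius P1 P2 P3 / (2 * circumradius P1 P2 P3) = (\<delta> - b\<^sup>2) * (a\<^sup>2 - \<delta>) / (a\<^sup>2 - b\<^sup>2)\<^sup>2"
proof -
  have a0: "a > 0" and b0: "b > 0" using ab by auto
  have nc: "\<not> collinear {P1, P2, P3}" and on1: "P1 \<in> ellipse a b" and on2: "P2 \<in> ellipse a b"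
    and on3: "P3 \<in> ellipse a b" and nb1: "normal_bisects a b P1 P2 P3"
    and nb2: "normal_bisects a b P2 P3 P1"
    using orb unfolding billiard_3_orbit_def by auto
  have nc2: "\<not> collinear {P2, P3, P1}" using nc by (simp add: insert_commute)
  note nf = noncoll_facts[OF nc]
  note B1 = bisect_e[OF a0 b0 on1 on2 on3 nc nb1]
  note B2 = bisect_e[OF a0 b0 on2 on3 on1 nc2 nb2]
  define u1 where "u1 = fst P1 / a"
  define v1 where "v1 = snd P1 / b"
  define u2 where "u2 = fst P2 / a"
  define v2 where "v2 = snd P2 / b"
  define u3 where "u3 = fst P3 / a"
  define v3 where "v3 = snd P3 / b"
  have P1: "P1 = (a * u1, b * v1)" using a0 b0 by (simp add: u1_def v1_def)
  have P2: "P2 = (a * u2, b * v2)" using a0 b0 by (simp add: u2_def v2_def)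
  have P3: "P3 = (a * u3, b * v3)" using a0 b0 by (simp add: u3_def v3_def)
  have c1: "u1\<^sup>2 + v1\<^sup>2 = 1" using on1 by (simp add: ellipse_def u1_def v1_def power_divide)
  have c2: "u2\<^sup>2 + v2\<^sup>2 = 1" using on2 by (simp add: ellipse_def u2_def v2_def power_divide)
  have c3: "u3\<^sup>2 + v3\<^sup>2 = 1" using on3 by (simp add: ellipse_def u3_def v3_def power_divide)
  have dist_uv: "dist (a * ui, b * vi) (a * uj, b * vj) = sqrt (a\<^sup>2 * (ui - uj)\<^sup>2 + b\<^sup>2 * (vi - vj)\<^sup>2)" for ui vi uj vj
  proof -
    have "(a * ui - a * uj)\<^sup>2 = a\<^sup>2 * (ui - uj)\<^sup>2" "(b * vi - b * vj)\<^sup>2 = b\<^sup>2 * (vi - vj)\<^sup>2"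
      by (simp_all add: power2_eq_square algebra_simps)
    then show ?thesis by (simp add: dist_pp)
  qed
  define E12 where "E12 = (u1 - u2)\<^sup>2 + (v1 - v2)\<^sup>2"
  define E13 where "E13 = (u1 - u3)\<^sup>2 + (v1 - v3)\<^sup>2"
  define E23 where "E23 = (u2 - u3)\<^sup>2 + (v2 - v3)\<^sup>2"
  define D12 where "D12 = sqrt (a\<^sup>2 * (u1 - u2)\<^sup>2 + b\<^sup>2 * (v1 - v2)\<^sup>2)"
  define D13 where "D13 = sqrt (a\<^sup>2 * (u1 - u3)\<^sup>2 + b\<^sup>2 * (v1 - v3)\<^sup>2)"
  define D23 where "D23 = sqrt (a\<^sup>2 * (u2 - u3)\<^sup>2 + b\<^sup>2 * (v2 - v3)\<^sup>2)"
  have dd12: "dist P1 P2 = D12" "dist P2 P1 = D12" by (simp_all add: P1 P2 dist_uv D12_def dist_commute)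
  have dd13: "dist P1 P3 = D13" "dist P3 P1 = D13" by (simp_all add: P1 P3 dist_uv D13_def dist_commute)
  have dd23: "dist P2 P3 = D23" "dist P3 P2 = D23" by (simp_all add: P2 P3 dist_uv D23_def dist_commute)
  have D12pos: "D12 > 0" using nf(2) dd12 by (metis zero_less_dist_iff)
  have D13pos: "D13 > 0" using nf(4) dd13 by (metis zero_less_dist_iff)
  have D23pos: "D23 > 0" using nf(3) dd23 by (metis zero_less_dist_iff)
  have ne12: "u1 \<noteq> u2 \<or> v1 \<noteq> v2" using nf(2) by (auto simp: P1 P2)
  have ne13: "u1 \<noteq> u3 \<or> v1 \<noteq> v3" using nf(4) by (auto simp: P1 P3)
  have ne23: "u2 \<noteq> u3 \<or> v2 \<noteq> v3" using nf(3) by (auto simp: P2 P3)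
  have E12pos: "E12 > 0" using ne12 by (simp add: E12_def sum_power2_gt_zero_iff)
  have E13pos: "E13 > 0" using ne13 by (simp add: E13_def sum_power2_gt_zero_iff)
  have E23pos: "E23 > 0" using ne23 by (simp add: E23_def sum_power2_gt_zero_iff)
  have B1': "E12 * D13 = E13 * D12"
    using B1 a0 b0 unfolding dd12 dd13 by (simp add: P1 P2 P3 E12_def E13_def power2_commute)
  have B2': "E23 * D12 = E12 * D23"
    using B2 a0 b0 unfolding dd12 dd23 by (simp add: P1 P2 P3 E12_def E23_def power2_commute)
  define k where "k = E12 / D12"
  have kpos: "k > 0" using E12pos D12pos by (simp add: k_def)
  have k12: "E12 = k * D12" using D12pos by (simp add: k_def)
  have k13: "E13 = k * D13" using B1' D12pos by (simp add: k_def field_simps)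
  have k23: "E23 = k * D23" using B2' D12pos by (simp add: k_def field_simps)
  define mu where "mu = k\<^sup>2 * ((a\<^sup>2 - b\<^sup>2) / 2)"
  define al where "al = 2 - k\<^sup>2 * ((a\<^sup>2 + b\<^sup>2) / 2)"
  have R12: "2 * (u1 * u2 + v1 * v2) - mu * (u1 * u2 - v1 * v2) = al"
    using pair_rel[OF c1 c2 k12[unfolded E12_def D12_def] E12pos[unfolded E12_def]] by (simp add: mu_def al_def)
  have R13: "2 * (u1 * u3 + v1 * v3) - mu * (u1 * u3 - v1 * v3) = al"
    using pair_rel[OF c1 c3 k13[unfolded E13_def D13_def] E13pos[unfolded E13_def]] by (simp add: mu_def al_def)
  have R23: "2 * (u2 * u3 + v2 * v3) - mu * (u2 * u3 - v2 * v3) = al"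
    using pair_rel[OF c2 c3 k23[unfolded E23_def D23_def] E23pos[unfolded E23_def]] by (simp add: mu_def al_def)
  define z1 where "z1 = Complex u1 v1"
  define z2 where "z2 = Complex u2 v2"
  define z3 where "z3 = Complex u3 v3"
  have zd12: "z1 \<noteq> z2" using ne12 by (simp add: z1_def z2_def)
  have zd13: "z1 \<noteq> z3" using ne13 by (simp add: z1_def z3_def)
  have zd23: "z2 \<noteq> z3" using ne23 by (simp add: z2_def z3_def)
  have zn1: "z1 \<noteq> 0" using c1 by (auto simp: z1_def complex_eq_iff)
  note CC = cplx_core[OF zd12 zd13 zd23 zn1 cplx_rel[OF c1 c2 R12, folded z1_def z2_def]
      cplx_rel[OF c1 c3 R13, folded z1_def z3_def] cplx_rel[OF c2 c3 R23, folded z2_def z3_def]]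
  have "complex_of_real (mu\<^sup>2) = complex_of_real (4 + 4 * al)" using CC(1) by simp
  then have musq: "mu\<^sup>2 = 4 + 4 * al" by (simp only: of_real_eq_iff)
  have cm: "cmod (Complex u v) = sqrt (u\<^sup>2 + v\<^sup>2)" for u v by (simp add: cmod_def)
  have "cmod (2 * (z1 + z2 + z3)) = cmod (- complex_of_real mu * (z1 * z2 * z3))" using CC(2) by simp
  moreover have "cmod (2 * (z1 + z2 + z3)) = 2 * cmod (z1 + z2 + z3)"
    by (simp only: norm_mult) simp
  moreover have "cmod (- complex_of_real mu * (z1 * z2 * z3)) = \<bar>mu\<bar> * (cmod z1 * cmod z2 * cmod z3)"
    by (simp only: norm_mult norm_minus_cancel norm_of_real)
  moreover have "cmod z1 = 1" "cmod z2 = 1" "cmod z3 = 1" using c1 c2 c3 by (simp_all add: z1_def z2_def z3_def cm)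
  ultimately have "2 * cmod (z1 + z2 + z3) = \<bar>mu\<bar>" by simp
  moreover have "z1 + z2 + z3 = Complex (u1 + u2 + u3) (v1 + v2 + v3)" by (simp add: z1_def z2_def z3_def complex_eq_iff)
  ultimately have "2 * sqrt ((u1 + u2 + u3)\<^sup>2 + (v1 + v2 + v3)\<^sup>2) = \<bar>mu\<bar>" by (simp add: cm)
  then have "(2 * sqrt ((u1 + u2 + u3)\<^sup>2 + (v1 + v2 + v3)\<^sup>2))\<^sup>2 = mu\<^sup>2"
    by (metis power2_abs)
  then have "4 * ((u1 + u2 + u3)\<^sup>2 + (v1 + v2 + v3)\<^sup>2) = mu\<^sup>2"
    by (simp add: power_mult_distrib)
  moreover have "E12 + E13 + E23 + ((u1 + u2 + u3)\<^sup>2 + (v1 + v2 + v3)\<^sup>2) = 9"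
    using c1 c2 c3 unfolding E12_def E13_def E23_def by algebra
  ultimately have sumE: "4 * (E12 + E13 + E23) = 36 - mu\<^sup>2" by simp
  define Dc where "Dc = (u2 - u1) * (v3 - v1) - (v2 - v1) * (u3 - u1)"
  have cr: "cross2 (P2 - P1) (P3 - P1) = a * b * Dc"
    by (simp add: P1 P2 P3 cross2_def Dc_def algebra_simps)
  define C where "C = \<bar>cross2 (P2 - P1) (P3 - P1)\<bar>"
  have Cpos: "C > 0" using nf(1) by (simp add: C_def)
  have C2: "4 * C\<^sup>2 = a\<^sup>2 * b\<^sup>2 * (E12 * E13 * E23)"
  proof -
    have "4 * C\<^sup>2 = a\<^sup>2 * b\<^sup>2 * (4 * Dc\<^sup>2)" by (simp add: C_def cr power_mult_distrib)
    also have "4 * Dc\<^sup>2 = E12 * E13 * E23" unfolding Dc_def E12_def E13_def E23_def by (rule Dsq[OF c1 c2 c3])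
    finally show ?thesis .
  qed
  have rr: "inradius P1 P2 P3 = C / (D12 + D23 + D13)"
    using inradius_formula[OF nc] by (simp add: C_def dd12 dd13 dd23)
  have RR: "circumradius P1 P2 P3 = D12 * D23 * D13 / (2 * C)"
    using circumradius_formula[OF nc] by (simp add: C_def dd12 dd13 dd23)
  have ratio1: "inradius P1 P2 P3 / (2 * circumradius P1 P2 P3) = C\<^sup>2 / ((D12 + D23 + D13) * (D12 * D23 * D13))"
    unfolding rr RR using Cpos D12pos D13pos D23pos by (simp add: field_simps power2_eq_square)
  have Dk: "D12 = E12 / k" "D13 = E13 / k" "D23 = E23 / k" using k12 k13 k23 kpos by simp_all
  have ratio2: "C\<^sup>2 / ((D12 + D23 + D13) * (D12 * D23 * D13)) = a\<^sup>2 * b\<^sup>2 * (k\<^sup>2)\<^sup>2 / (4 * (E12 + E13 + E23))"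
  proof -
    define X where "X = (E12 + E13 + E23) * (E12 * E13 * E23)"
    have Xpos: "X > 0" using E12pos E13pos E23pos by (simp add: X_def)
    have den: "(D12 + D23 + D13) * (D12 * D23 * D13) = X / k ^ 4"
      unfolding Dk X_def using kpos by (simp add: field_simps power4_eq_xxxx)
    have "C\<^sup>2 / ((D12 + D23 + D13) * (D12 * D23 * D13)) = C\<^sup>2 * k ^ 4 / X"
      unfolding den using Xpos kpos by simp
    also have "\<dots> = a\<^sup>2 * b\<^sup>2 * (k\<^sup>2)\<^sup>2 / (4 * (E12 + E13 + E23))"
    proof (rule iffD2[OF frac_eq_eq])
      show "X \<noteq> 0" using Xpos by simp
      show "4 * (E12 + E13 + E23) \<noteq> 0" using E12pos E13pos E23pos by simp
      show "C\<^sup>2 * k ^ 4 * (4 * (E12 + E13 + E23)) = a\<^sup>2 * b\<^sup>2 * (k\<^sup>2)\<^sup>2 * X"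
        using C2 unfolding X_def by algebra
    qed
    finally show ?thesis .
  qed
  define \<kappa> where "\<kappa> = k\<^sup>2"
  have kap: "\<kappa> > 0" using kpos by (simp add: \<kappa>_def)
  have q: "\<kappa>\<^sup>2 * ((a\<^sup>2 - b\<^sup>2) / 2)\<^sup>2 + 4 * ((a\<^sup>2 + b\<^sup>2) / 2) * \<kappa> - 12 = 0"
  proof -
    define Bh where "Bh = (a\<^sup>2 - b\<^sup>2) / 2"
    define Ah where "Ah = (a\<^sup>2 + b\<^sup>2) / 2"
    have m1: "mu = \<kappa> * Bh" by (simp add: mu_def \<kappa>_def Bh_def)
    have m2: "al = 2 - \<kappa> * Ah" by (simp add: al_def \<kappa>_def Ah_def)
    have "\<kappa>\<^sup>2 * Bh\<^sup>2 + 4 * Ah * \<kappa> - 12 = 0" using musq unfolding m1 m2 by algebra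
    from this[unfolded Bh_def Ah_def] show ?thesis .
  qed
  have "36 - mu\<^sup>2 = 24 + 4 * \<kappa> * ((a\<^sup>2 + b\<^sup>2) / 2)" using musq unfolding al_def \<kappa>_def by simp
  then have "inradius P1 P2 P3 / (2 * circumradius P1 P2 P3) = a\<^sup>2 * b\<^sup>2 * \<kappa>\<^sup>2 / (24 + 4 * \<kappa> * ((a\<^sup>2 + b\<^sup>2) / 2))"
    using ratio1 ratio2 sumE by (simp add: \<kappa>_def)
  also have "\<dots> = (\<delta> - b\<^sup>2) * (a\<^sup>2 - \<delta>) / (a\<^sup>2 - b\<^sup>2)\<^sup>2" by (rule kappa_final[OF ab hd kap q])
  finally show ?thesis .
qed

theorem theorem3:
  fixes a b c \<delta> a_c b_c :: real and P1 P2 P3 :: "real \<times> real"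
  assumes "a > b" and "b > 0"
    and "c\<^sup>2 = a\<^sup>2 - b\<^sup>2"
    and "\<delta> = sqrt (a ^ 4 - a\<^sup>2 * b\<^sup>2 + b ^ 4)"
    and "a_c = a * (\<delta> - b\<^sup>2) / c\<^sup>2"
    and "b_c = b * (a\<^sup>2 - \<delta>) / c\<^sup>2"
    and "billiard_3_orbit a b P1 P2 P3"
  shows "measure lborel (ellipse_region a_c b_c) / measure lborel (ellipse_region a b)
         = inradius P1 P2 P3 / (2 * circumradius P1 P2 P3)"
proof -
  have a0: "a > 0" and b0: "b > 0" using assms(1,2) by auto
  have a2b2: "b\<^sup>2 < a\<^sup>2" using assms(1,2) by (simp add: power_strict_mono)
  have b2pos: "b\<^sup>2 > 0" using b0 by simp
  have c2pos: "c\<^sup>2 > 0" using assms(3) a2b2 by simp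
  have c0: "c \<noteq> 0" using c2pos by auto
  have b4: "b ^ 4 = (b\<^sup>2)\<^sup>2" and a4: "a ^ 4 = (a\<^sup>2)\<^sup>2" by (simp_all add: power_mult[symmetric])
  have lo: "(b\<^sup>2)\<^sup>2 < a ^ 4 - a\<^sup>2 * b\<^sup>2 + b ^ 4"
  proof -
    have "a\<^sup>2 * (a\<^sup>2 - b\<^sup>2) > 0" using a2b2 a0 by simp
    then show ?thesis unfolding b4 a4 by (simp add: algebra_simps power2_eq_square)
  qed
  have hi: "a ^ 4 - a\<^sup>2 * b\<^sup>2 + b ^ 4 < (a\<^sup>2)\<^sup>2"
  proof -
    have "b\<^sup>2 * (a\<^sup>2 - b\<^sup>2) > 0" using a2b2 b2pos by simp
    then show ?thesis unfolding b4 a4 by (simp add: algebra_simps power2_eq_square)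
  qed
  have dlo: "\<delta> > b\<^sup>2"
  proof -
    have "sqrt ((b\<^sup>2)\<^sup>2) < \<delta>" unfolding assms(4) using lo by (rule real_sqrt_less_mono)
    moreover have "sqrt ((b\<^sup>2)\<^sup>2) = b\<^sup>2" by (rule real_sqrt_unique) simp_all
    ultimately show ?thesis by linarith
  qed
  have dhi: "\<delta> < a\<^sup>2"
  proof -
    have "\<delta> < sqrt ((a\<^sup>2)\<^sup>2)" unfolding assms(4) using hi by (rule real_sqrt_less_mono)
    moreover have "sqrt ((a\<^sup>2)\<^sup>2) = a\<^sup>2" by (rule real_sqrt_unique) simp_all
    ultimately show ?thesis by linarith
  qed
  have acpos: "a_c > 0" unfolding assms(5) using a0 dlo c2pos by simp
  have bcpos: "b_c > 0" unfolding assms(6) using b0 dhi c2pos by simp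
  note M1 = ell_measure(1)[OF acpos bcpos] and M2 = ell_measure(1)[OF a0 b0] and M0 = ell_measure(2)[OF a0 b0]
  have "measure lborel (ellipse_region a_c b_c) / measure lborel (ellipse_region a b) = a_c * b_c / (a * b)"
    unfolding M1 M2 using M0 a0 b0 by (simp add: field_simps)
  also have "\<dots> = (\<delta> - b\<^sup>2) * (a\<^sup>2 - \<delta>) / (a\<^sup>2 - b\<^sup>2)\<^sup>2"
    unfolding assms(5,6) assms(3)[symmetric] using a0 b0 c2pos c0 by (simp add: field_simps power2_eq_square)
  also have "\<dots> = inradius P1 P2 P3 / (2 * circumradius P1 P2 P3)"
    using core[OF assms(1,2,4,7)] by simp
  finally show ?thesis .
qed

end
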